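(* For a composition $I$, let $\mathcal C_I=\sum_{\sigma:\ \mathrm{SC}(\sigma)=I}\mathbf G_\sigma\in\mathbf{FQSym}$ (with $\mathcal C_{\emptyset}=\mathbf G_{\emptyset}=1$). Then the elements $\mathcal C_I$ span a sub-coalgebra of $\mathbf{FQSym}$; more precisely, for every composition $I$ there are nonnegative integers $a_I^{JK}$ such that $$\Delta\,\mathcal C_I=\sum_{J,K}a_I^{JK}\,\mathcal C_J\otimes\mathcal C_K,$$ the sum running over pairs of (possibly empty) compositions $J,K$.
   Context: Permutations are viewed as words. A word $a_1\cdots a_m$ is initially dominated if $a_1>a_j$ for all $j\ge2$; every permutation $\sigma$ factors uniquely as $\sigma=u_1\cdots u_r$ into initially dominated words with increasing first letters, and its saillance composition is $\mathrm{SC}(\sigma)=(|u_1|,\ldots,|u_r|)$. $\mathbf{FQSym}$ is the Hopf algebra of free quasi-symmetric functions (over $\mathbb Q$), with basis $\mathbf G_\sigma$, $\sigma$ ranging over all permutations of all sizes $n\ge0$, and coproduct $\Delta\mathbf G_\sigma=\sum_{k=0}^{n}\mathbf G_{\sigma|_{[1,k]}}\otimes\mathbf G_{\mathrm{std}(\sigma|_{[k+1,n]})}$ for $\sigma\in\mathfrak S_n$, where $\sigma|_{[a,b]}$ is the subword of $\sigma$ formed by the letters in $[a,b]$ and $\mathrm{std}$ denotes standardization. *)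

theory Defs
  imports Complex_Main
begin

definition is_perm :: "nat list \<Rightarrow> bool" where
  "is_perm \<sigma> \<longleftrightarrow> distinct \<sigma> \<and> set \<sigma> = {1..length \<sigma>}"

definition is_composition :: "nat list \<Rightarrow> bool" where
  "is_composition I \<longleftrightarrow> (\<forall>i\<in>set I. 0 < i)"

definition init_dominated :: "nat list \<Rightarrow> bool" where
  "init_dominated u \<longleftrightarrow> u \<noteq> [] \<and> (\<forall>j. 1 \<le> j \<and> j < length u \<longrightarrow> u ! j < u ! 0)"

definition sal_factorization :: "nat list \<Rightarrow> nat list list \<Rightarrow> bool" where
  "sal_factorization \<sigma> us \<longleftrightarrow> concat us = \<sigma> \<and> (\<forall>u\<in>set us. init_dominated u)
      \<and> sorted_wrt (<) (map hd us)"

definition SC :: "nat list \<Rightarrow> nat list" where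
  "SC \<sigma> = map length (THE us. sal_factorization \<sigma> us)"

definition std :: "nat list \<Rightarrow> nat list" where
  "std w = map (\<lambda>x. card {y \<in> set w. y \<le> x}) w"

(* Elements of FQSym: rational coefficient functions on permutations (finite support,
   coefficient of G_sigma at sigma); elements of FQSym \<otimes> FQSym: coefficient functions
   on pairs of permutations (coefficient of G_alpha \<otimes> G_beta at (alpha,beta)). *)
type_synonym fqsym = "nat list \<Rightarrow> rat"
type_synonym fqsym2 = "nat list \<times> nat list \<Rightarrow> rat"

definition G :: "nat list \<Rightarrow> fqsym" where
  "G \<sigma> = (\<lambda>\<tau>. if \<tau> = \<sigma> then 1 else 0)"

definition tensor :: "fqsym \<Rightarrow> fqsym \<Rightarrow> fqsym2" where
  "tensor x y = (\<lambda>(\<alpha>, \<beta>). x \<alpha> * y \<beta>)"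

definition DeltaG :: "nat list \<Rightarrow> fqsym2" where
  "DeltaG \<sigma> = (\<lambda>p. \<Sum>k\<in>{0..length \<sigma>}.
      tensor (G (filter (\<lambda>x. x \<le> k) \<sigma>)) (G (std (filter (\<lambda>x. k < x) \<sigma>))) p)"

(* linear extension of the coproduct (for finitely supported x) *)
definition Delta :: "fqsym \<Rightarrow> fqsym2" where
  "Delta x = (\<lambda>p. \<Sum>\<sigma>\<in>{\<sigma>. x \<sigma> \<noteq> 0}. x \<sigma> * DeltaG \<sigma> p)"

definition C :: "nat list \<Rightarrow> fqsym" where
  "C I = (\<lambda>\<sigma>. if is_perm \<sigma> \<and> SC \<sigma> = I then 1 else 0)"

end

theory Submission imports Defs begin

function salf :: "nat list \<Rightarrow> nat list list" where
  "salf [] = []"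
| "salf (x#xs) = (x # takeWhile (\<lambda>y. y < x) xs) # salf (dropWhile (\<lambda>y. y < x) xs)"
  by pat_completeness auto
termination by (relation "measure length") (auto simp: le_imp_less_Suc length_dropWhile_le)

lemma salf_nonempty: "u \<in> set (salf xs) \<Longrightarrow> u \<noteq> []"
  by (induction xs rule: salf.induct) auto

lemma hd_fact: "xs \<noteq> [] \<Longrightarrow> hd (hd (salf xs)) = hd xs"
  by (cases xs) auto

lemma sorted_hd_le: "sorted_wrt (<) (map hd (us::nat list list)) \<Longrightarrow> us \<noteq> [] \<Longrightarrow> u \<in> set us \<Longrightarrow> hd (hd us) \<le> hd u"
  by (cases us) (auto simp: less_imp_le)

lemma salf_sal: "distinct \<sigma> \<Longrightarrow> sal_factorization \<sigma> (salf \<sigma>)"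
proof (induction \<sigma> rule: salf.induct)
  case 1
  then show ?case by (simp add: sal_factorization_def)
next
  case (2 x xs)
  define r where "r = dropWhile (\<lambda>y. y < x) xs"
  have d: "distinct r" using 2(2) unfolding r_def by (simp add: distinct_dropWhile)
  have IH: "sal_factorization r (salf r)" using 2(1) d r_def by simp
  have idom: "init_dominated (x # takeWhile (\<lambda>y. y < x) xs)"
    unfolding init_dominated_def
  proof (intro conjI allI impI)
    fix j assume "1 \<le> j \<and> j < length (x # takeWhile (\<lambda>y. y < x) xs)"
    then have "(x # takeWhile (\<lambda>y. y < x) xs) ! j \<in> set (takeWhile (\<lambda>y. y < x) xs)"
      by (cases j) auto
    then show "(x # takeWhile (\<lambda>y. y < x) xs) ! j < (x # takeWhile (\<lambda>y. y < x) xs) ! 0"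
      by (auto dest: set_takeWhileD)
  qed simp
  have hx: "r \<noteq> [] \<Longrightarrow> x < hd r"
  proof -
    assume "r \<noteq> []"
    then have "\<not> hd r < x" unfolding r_def using hd_dropWhile by blast
    moreover have "hd r \<in> set xs" using \<open>r \<noteq> []\<close> unfolding r_def
      by (metis hd_in_set set_dropWhileD)
    ultimately show ?thesis using 2(2) by (cases "hd r = x") auto
  qed
  have "\<forall>u\<in>set (salf r). x < hd u"
  proof
    fix u assume u: "u \<in> set (salf r)"
    then have "r \<noteq> []" by auto
    have "salf r \<noteq> []" using u by auto
    then have "hd (hd (salf r)) \<le> hd u" using sorted_hd_le IH u unfolding sal_factorization_def by blast
    then show "x < hd u" using hx[OF \<open>r \<noteq> []\<close>] hd_fact[OF \<open>r \<noteq> []\<close>] by simp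
  qed
  then show ?case using IH idom unfolding sal_factorization_def
    by (simp add: r_def)
qed

lemma tw_nil: "zs = [] \<or> x \<le> hd zs \<Longrightarrow> takeWhile (\<lambda>y. y < (x::nat)) zs = []"
  by (cases zs) auto

lemma dw_nil: "zs = [] \<or> x \<le> hd zs \<Longrightarrow> dropWhile (\<lambda>y. y < (x::nat)) zs = zs"
  by (cases zs) auto

lemma sal_unique: "sal_factorization \<sigma> us \<Longrightarrow> us = salf \<sigma>"
proof (induction us arbitrary: \<sigma>)
  case Nil
  then show ?case by (simp add: sal_factorization_def)
next
  case (Cons u us)
  have idu: "init_dominated u" using Cons(2) by (simp add: sal_factorization_def)
  then obtain x r where u: "u = x # r" unfolding init_dominated_def by (cases u) auto
  have rx: "\<forall>y\<in>set r. y < x"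
  proof
    fix y assume "y \<in> set r"
    then obtain j where "j < length r" "r ! j = y" by (auto simp: in_set_conv_nth)
    moreover have "1 \<le> Suc j \<and> Suc j < length u" using \<open>j < length r\<close> u by simp
    ultimately have "u ! Suc j < u ! 0" using idu unfolding init_dominated_def by blast
    then show "y < x" using u \<open>r ! j = y\<close> by simp
  qed
  have sus: "sal_factorization (concat us) us" using Cons(2) by (simp add: sal_factorization_def)
  have hus: "\<forall>v\<in>set us. x < hd v" using Cons(2) u by (simp add: sal_factorization_def)
  have ne: "\<forall>v\<in>set us. v \<noteq> []" using sus by (auto simp: sal_factorization_def init_dominated_def)
  have c: "concat us = [] \<or> x \<le> hd (concat us)"
  proof (cases us)
    case (Cons v vs)
    then show ?thesis using hus ne by auto
  qed simp
  have tw: "takeWhile (\<lambda>y. y < x) (concat us) = []" using c tw_nil by blast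
  have dw: "dropWhile (\<lambda>y. y < x) (concat us) = concat us" using c dw_nil by blast
  have \<sigma>: "\<sigma> = x # r @ concat us" using Cons(2) u by (simp add: sal_factorization_def)
  show ?case using Cons.IH[OF sus] \<sigma> u rx tw dw
    by (simp add: takeWhile_append2 dropWhile_append2)
qed

lemma SC_salf: "distinct \<sigma> \<Longrightarrow> SC \<sigma> = map length (salf \<sigma>)"
  unfolding SC_def using salf_sal sal_unique by (metis the_equality)


fun mk :: "nat option \<Rightarrow> nat list \<Rightarrow> bool list" where
  "mk m [] = []"
| "mk m (x#xs) = (case m of None \<Rightarrow> True | Some v \<Rightarrow> v < x)
      # mk (Some (case m of None \<Rightarrow> x | Some v \<Rightarrow> max v x)) xs"

definition moc :: "nat list \<Rightarrow> bool list" where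
  "moc I = concat (map (\<lambda>i. True # replicate (i - 1) False) I)"

function dec :: "bool list \<Rightarrow> nat list" where
  "dec [] = []"
| "dec (b # bs) = (1 + length (takeWhile Not bs)) # dec (dropWhile Not bs)"
  by pat_completeness auto
termination by (relation "measure length") (auto simp: le_imp_less_Suc length_dropWhile_le)

lemma moc_Cons: "moc (i # I) = True # replicate (i - 1) False @ moc I"
  by (simp add: moc_def)

lemma moc_hd: "is_composition I \<Longrightarrow> moc I = [] \<or> hd (moc I) = True"
  by (cases I) (auto simp: moc_def)

lemma tw_rep: "takeWhile Not (replicate m False @ Y) = replicate m False @ takeWhile Not Y"
  by (induction m) auto

lemma dw_rep: "dropWhile Not (replicate m False @ Y) = dropWhile Not Y"
  by (induction m) auto

lemma dec_moc: "is_composition I \<Longrightarrow> dec (moc I) = I"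
proof (induction I)
  case Nil
  then show ?case by (simp add: moc_def)
next
  case (Cons i I)
  have cI: "is_composition I" "0 < i" using Cons(2) by (auto simp: is_composition_def)
  have h: "takeWhile Not (moc I) = []" "dropWhile Not (moc I) = moc I"
    using moc_hd[OF cI(1)] by (cases "moc I"; auto)+
  show ?case using Cons.IH[OF cI(1)] cI(2) h
    by (simp add: moc_Cons tw_rep dw_rep)
qed

lemma mk_Some: "x \<notin> set xs \<Longrightarrow>
   mk (Some x) xs = replicate (length (takeWhile (\<lambda>y. y < x) xs)) False @ mk None (dropWhile (\<lambda>y. y < x) xs)"
proof (induction xs)
  case (Cons y ys)
  show ?case
  proof (cases "y < x")
    case True
    then have "max x y = x" by simp
    then show ?thesis using Cons True by simp
  next
    case False
    then have "x < y" using Cons(2) by simp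
    then show ?thesis by simp
  qed
qed simp

lemma mk_salf: "distinct \<sigma> \<Longrightarrow> mk None \<sigma> = moc (map length (salf \<sigma>))"
proof (induction \<sigma> rule: salf.induct)
  case 1
  then show ?case by (simp add: moc_def)
next
  case (2 x xs)
  then show ?case by (simp add: mk_Some moc_Cons distinct_dropWhile)
qed

lemma SC_comp: "distinct \<sigma> \<Longrightarrow> is_composition (SC \<sigma>)"
  using salf_nonempty by (auto simp: SC_salf is_composition_def)

lemma sum_SC: "distinct \<sigma> \<Longrightarrow> sum_list (SC \<sigma>) = length \<sigma>"
proof -
  assume d: "distinct \<sigma>"
  have "concat (salf \<sigma>) = \<sigma>" using salf_sal[OF d] by (simp add: sal_factorization_def)
  then show ?thesis using d SC_salf[OF d] by (metis length_concat)
qed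

lemma mk_SC: "distinct \<sigma> \<Longrightarrow> mk None \<sigma> = moc (SC \<sigma>)"
  using SC_salf mk_salf by metis

lemma SC_eq_iff: "distinct \<sigma> \<Longrightarrow> is_composition I \<Longrightarrow> SC \<sigma> = I \<longleftrightarrow> mk None \<sigma> = moc I"
proof
  assume "distinct \<sigma>" "is_composition I" "mk None \<sigma> = moc I"
  then have "dec (moc (SC \<sigma>)) = dec (moc I)" by (simp add: mk_SC)
  then show "SC \<sigma> = I" using dec_moc SC_comp \<open>distinct \<sigma>\<close> \<open>is_composition I\<close> by metis
qed (simp add: mk_SC)


fun merge :: "bool list \<Rightarrow> nat list \<Rightarrow> nat list \<Rightarrow> nat list" where
  "merge [] xs ys = []"
| "merge (True # w) (x # xs) ys = x # merge w xs ys"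
| "merge (True # w) [] ys = []"
| "merge (False # w) xs (y # ys) = y # merge w xs ys"
| "merge (False # w) xs [] = []"

fun mm :: "bool \<Rightarrow> bool list \<Rightarrow> bool list \<Rightarrow> bool list \<Rightarrow> bool list" where
  "mm s [] xs ys = []"
| "mm s (True # w) (x # xs) ys = (x \<and> \<not> s) # mm s w xs ys"
| "mm s (True # w) [] ys = []"
| "mm s (False # w) xs (y # ys) = y # mm True w xs ys"
| "mm s (False # w) xs [] = []"

lemma merge_filter: "merge (map P xs) (filter P xs) (filter (\<lambda>x. \<not> P x) xs) = xs"
  by (induction xs) auto

lemma merge_props:
  assumes "length (filter id w) = length xs" "length (filter Not w) = length ys"
  shows "length (merge w xs ys) = length w \<and> set (merge w xs ys) = set xs \<union> set ys"
  using assms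
proof (induction w arbitrary: xs ys)
  case (Cons b w)
  then show ?case by (cases b; cases xs; cases ys) auto
qed simp

lemma merge_filter1:
  assumes "length (filter id w) = length xs" "length (filter Not w) = length ys"
    "\<forall>x\<in>set xs. P x" "\<forall>y\<in>set ys. \<not> P y"
  shows "filter P (merge w xs ys) = xs \<and> filter (\<lambda>x. \<not> P x) (merge w xs ys) = ys
     \<and> map P (merge w xs ys) = w"
  using assms
proof (induction w arbitrary: xs ys)
  case (Cons b w)
  then show ?case by (cases b; cases xs; cases ys) auto
qed simp

lemma mk_merge:
  assumes "\<forall>x\<in>set xs. \<forall>y\<in>set ys. x < y" "\<forall>a\<in>set_option mA. \<forall>y\<in>set ys. a < y"
    "\<forall>g\<in>set_option mG. \<forall>x\<in>set xs. x < g"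
  shows "mk (case mG of None \<Rightarrow> mA | Some g \<Rightarrow> Some g) (merge w xs ys)
         = mm (mG \<noteq> None) w (mk mA xs) (mk mG ys)"
  using assms
proof (induction w arbitrary: xs ys mA mG)
  case Nil
  then show ?case by simp
next
  case (Cons b w)
  show ?case
  proof (cases b)
    case True
    show ?thesis
    proof (cases xs)
      case Nil
      then show ?thesis using True by simp
    next
      case (Cons x xs')
      show ?thesis
      proof (cases mG)
        case None
        define mA' where "mA' = Some (case mA of None \<Rightarrow> x | Some v \<Rightarrow> max v x)"
        have "mk (case mG of None \<Rightarrow> mA' | Some g \<Rightarrow> Some g) (merge w xs' ys)
            = mm (mG \<noteq> None) w (mk mA' xs') (mk mG ys)"
          apply (rule Cons.IH)
          using Cons.prems \<open>xs = x # xs'\<close> None unfolding mA'_def by (auto split: option.splits)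
        then show ?thesis using True \<open>xs = x # xs'\<close> None unfolding mA'_def
          by (simp split: option.splits)
      next
        case (Some g)
        have xg: "x < g" using Cons.prems Some \<open>xs = x # xs'\<close> by auto
        define mA' where "mA' = Some (case mA of None \<Rightarrow> x | Some v \<Rightarrow> max v x)"
        have "mk (case mG of None \<Rightarrow> mA' | Some g \<Rightarrow> Some g) (merge w xs' ys)
            = mm (mG \<noteq> None) w (mk mA' xs') (mk mG ys)"
          apply (rule Cons.IH)
          using Cons.prems \<open>xs = x # xs'\<close> unfolding mA'_def by (auto split: option.splits)
        moreover have "max g x = g" using xg by simp
        ultimately show ?thesis using True \<open>xs = x # xs'\<close> Some xg unfolding mA'_def
          by (simp split: option.splits)
      qed
    qed
  next
    case False
    show ?thesis
    proof (cases ys)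
      case Nil
      then show ?thesis using False by simp
    next
      case (Cons y ys')
      show ?thesis
      proof (cases mG)
        case None
        have ay: "\<forall>a\<in>set_option mA. a < y" using Cons.prems \<open>ys = y # ys'\<close> by auto
        have "mk (case Some y of None \<Rightarrow> mA | Some g \<Rightarrow> Some g) (merge w xs ys')
            = mm (Some y \<noteq> None) w (mk mA xs) (mk (Some y) ys')"
          apply (rule Cons.IH)
          using Cons.prems \<open>ys = y # ys'\<close> by auto
        moreover have "(case mA of None \<Rightarrow> True | Some v \<Rightarrow> v < y)"
          using ay by (cases mA) auto
        moreover have "Some (case mA of None \<Rightarrow> y | Some v \<Rightarrow> max v y) = Some y"
          using ay by (cases mA) auto
        ultimately show ?thesis using False \<open>ys = y # ys'\<close> None by simp
      next
        case (Some g)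
        have "mk (case Some (max g y) of None \<Rightarrow> mA | Some g \<Rightarrow> Some g) (merge w xs ys')
            = mm (Some (max g y) \<noteq> None) w (mk mA xs) (mk (Some (max g y)) ys')"
          apply (rule Cons.IH)
          using Cons.prems \<open>ys = y # ys'\<close> Some by (auto simp: less_max_iff_disj)
        then show ?thesis using False \<open>ys = y # ys'\<close> Some by simp
      qed
    qed
  qed
qed

lemma mk_shift: "mk (map_option (\<lambda>v. v + k) m) (map (\<lambda>x. x + k) xs) = mk m xs"
proof (induction xs arbitrary: m)
  case (Cons x xs)
  have "map_option (\<lambda>v. v + k) (Some (case m of None \<Rightarrow> x | Some v \<Rightarrow> max v x))
     = Some (case map_option (\<lambda>v. v + k) m of None \<Rightarrow> x + k | Some v \<Rightarrow> max v (x + k))"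
    by (cases m) auto
  then show ?case using Cons[of "Some (case m of None \<Rightarrow> x | Some v \<Rightarrow> max v x)"]
    by (cases m) auto
qed simp


lemma perm_distinct: "is_perm \<sigma> \<Longrightarrow> distinct \<sigma>"
  by (simp add: is_perm_def)

lemma filter_le_set: "is_perm \<sigma> \<Longrightarrow> k \<le> length \<sigma> \<Longrightarrow> set (filter (\<lambda>x. x \<le> k) \<sigma>) = {1..k}"
  by (auto simp: is_perm_def)

lemma filter_le_len: "is_perm \<sigma> \<Longrightarrow> k \<le> length \<sigma> \<Longrightarrow> length (filter (\<lambda>x. x \<le> k) \<sigma>) = k"
  using filter_le_set[of \<sigma> k] distinct_card[of "filter (\<lambda>x. x \<le> k) \<sigma>"]
  by (simp add: is_perm_def)

lemma filter_gt_set: "is_perm \<sigma> \<Longrightarrow> set (filter (\<lambda>x. k < x) \<sigma>) = {Suc k..length \<sigma>}"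
  by (auto simp: is_perm_def)

lemma filter_gt_len: "is_perm \<sigma> \<Longrightarrow> k \<le> length \<sigma> \<Longrightarrow> length (filter (\<lambda>x. k < x) \<sigma>) = length \<sigma> - k"
proof -
  assume p: "is_perm \<sigma>" and k: "k \<le> length \<sigma>"
  have "length (filter (\<lambda>x. x \<le> k) \<sigma>) + length (filter (\<lambda>x. \<not> x \<le> k) \<sigma>) = length \<sigma>"
    by (rule sum_length_filter_compl)
  then show ?thesis using filter_le_len[OF p k] by (simp add: not_le)
qed

lemma std_shift:
  assumes "set xs = {Suc k..m}"
  shows "std xs = map (\<lambda>x. x - k) xs"
  unfolding std_def
proof (rule map_cong[OF refl])
  fix x assume "x \<in> set xs"
  then have x: "Suc k \<le> x" "x \<le> m" using assms by auto
  have "{y \<in> set xs. y \<le> x} = {Suc k..x}" using assms x by auto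
  then show "card {y \<in> set xs. y \<le> x} = x - k" by simp
qed

lemma len_filter_id_map: "length (filter id (map P xs)) = length (filter P xs)"
  by (induction xs) auto

lemma len_filter_Not: "length (filter Not w) = length w - length (filter id w)"
proof -
  have "length (filter id w) + length (filter (\<lambda>x. \<not> id x) w) = length w"
    by (rule sum_length_filter_compl)
  then show ?thesis by simp
qed

lemma DG:
  assumes p: "is_perm \<sigma>"
  shows "DeltaG \<sigma> (\<alpha>, \<beta>) = (if filter (\<lambda>x. x \<le> length \<alpha>) \<sigma> = \<alpha> \<and>
            std (filter (\<lambda>x. length \<alpha> < x) \<sigma>) = \<beta> then 1 else 0)"
proof -
  let ?Q = "filter (\<lambda>x. x \<le> length \<alpha>) \<sigma> = \<alpha> \<and> std (filter (\<lambda>x. length \<alpha> < x) \<sigma>) = \<beta>"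
  have "\<forall>k\<in>{0..length \<sigma>}. tensor (G (filter (\<lambda>x. x \<le> k) \<sigma>)) (G (std (filter (\<lambda>x. k < x) \<sigma>))) (\<alpha>, \<beta>)
      = (if k = length \<alpha> then (if ?Q then 1 else 0) else 0)" (is "\<forall>k\<in>_. ?L k = ?R k")
  proof
    fix k assume k: "k \<in> {0..length \<sigma>}"
    show "tensor (G (filter (\<lambda>x. x \<le> k) \<sigma>)) (G (std (filter (\<lambda>x. k < x) \<sigma>))) (\<alpha>, \<beta>)
      = (if k = length \<alpha> then (if ?Q then 1 else 0) else 0)"
    proof (cases "filter (\<lambda>x. x \<le> k) \<sigma> = \<alpha>")
      case True
      then have "k = length \<alpha>" using filter_le_len[OF p] k by force
      then show ?thesis using True by (simp add: tensor_def G_def)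
    next
      case False
      then show ?thesis by (auto simp: tensor_def G_def)
    qed
  qed
  then have "DeltaG \<sigma> (\<alpha>, \<beta>) = (\<Sum>k\<in>{0..length \<sigma>}. (if k = length \<alpha> then (if ?Q then 1 else 0) else 0))"
    unfolding DeltaG_def using sum.cong[of "{0..length \<sigma>}" "{0..length \<sigma>}" ?L ?R] by blast
  also have "\<dots> = (if length \<alpha> \<in> {0..length \<sigma>} then (if ?Q then 1 else 0) else 0)"
    by (rule sum.delta) simp
  also have "\<dots> = (if ?Q then 1 else 0)"
  proof -
    have "?Q \<Longrightarrow> length \<alpha> \<le> length \<sigma>" by (metis length_filter_le)
    then show ?thesis by auto
  qed
  finally show ?thesis .
qed


lemma Q_props:
  assumes p: "is_perm \<sigma>" and q1: "filter (\<lambda>x. x \<le> length \<alpha>) \<sigma> = \<alpha>"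
    and q2: "std (filter (\<lambda>x. length \<alpha> < x) \<sigma>) = \<beta>"
  shows "is_perm \<alpha> \<and> is_perm \<beta> \<and> length \<alpha> + length \<beta> = length \<sigma>"
proof -
  let ?k = "length \<alpha>"
  have k: "?k \<le> length \<sigma>" using q1 by (metis length_filter_le)
  have dA: "distinct \<alpha>"
    using distinct_filter[OF perm_distinct[OF p], of "\<lambda>x. x \<le> length \<alpha>"] q1 by simp
  have "set \<alpha> = {1..length \<alpha>}" using filter_le_set[OF p k] q1 by simp
  then have pa: "is_perm \<alpha>" using dA by (simp add: is_perm_def)
  let ?d = "filter (\<lambda>x. ?k < x) \<sigma>"
  have sd: "set ?d = {Suc ?k..length \<sigma>}" by (rule filter_gt_set[OF p])
  have b: "\<beta> = map (\<lambda>x. x - ?k) ?d" using std_shift[OF sd] q2 by simp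
  have ld: "length ?d = length \<sigma> - ?k" by (rule filter_gt_len[OF p k])
  have dd: "distinct ?d" using perm_distinct[OF p] by simp
  have inj: "inj_on (\<lambda>x. x - ?k) (set ?d)" unfolding sd inj_on_def by auto
  have db: "distinct \<beta>" using b dd inj by (simp add: distinct_map)
  have "set \<beta> = (\<lambda>x. x - ?k) ` {Suc ?k..length \<sigma>}" using b sd by simp
  also have "\<dots> = {1..length \<sigma> - ?k}"
  proof
    show "{1..length \<sigma> - ?k} \<subseteq> (\<lambda>x. x - ?k) ` {Suc ?k..length \<sigma>}"
    proof
      fix y assume "y \<in> {1..length \<sigma> - ?k}"
      then have "y + ?k \<in> {Suc ?k..length \<sigma>}" "y = (y + ?k) - ?k" by auto
      then show "y \<in> (\<lambda>x. x - ?k) ` {Suc ?k..length \<sigma>}" by blast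
    qed
  qed auto
  finally have "set \<beta> = {1..length \<beta>}" using b ld by simp
  then have pb: "is_perm \<beta>" using db by (simp add: is_perm_def)
  show ?thesis using pa pb b ld k by simp
qed

lemma key:
  assumes cI: "is_composition I" and pa: "is_perm \<alpha>" and pb: "is_perm \<beta>"
    and n: "length \<alpha> + length \<beta> = n"
  shows "{\<sigma>. (is_perm \<sigma> \<and> SC \<sigma> = I) \<and> filter (\<lambda>x. x \<le> length \<alpha>) \<sigma> = \<alpha> \<and>
            std (filter (\<lambda>x. length \<alpha> < x) \<sigma>) = \<beta>}
       = (\<lambda>w. merge w \<alpha> (map (\<lambda>x. x + length \<alpha>) \<beta>)) `
         {w. length w = n \<and> length (filter id w) = length \<alpha> \<and> mm False w (mk None \<alpha>) (mk None \<beta>) = moc I}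
     \<and> inj_on (\<lambda>w. merge w \<alpha> (map (\<lambda>x. x + length \<alpha>) \<beta>))
         {w. length w = n \<and> length (filter id w) = length \<alpha> \<and> mm False w (mk None \<alpha>) (mk None \<beta>) = moc I}"
proof -
  define k where "k = length \<alpha>"
  define \<gamma> where "\<gamma> = map (\<lambda>x. x + k) \<beta>"
  define W where "W = {w. length w = n \<and> length (filter id w) = k \<and> mm False w (mk None \<alpha>) (mk None \<beta>) = moc I}"
  have sa: "set \<alpha> = {1..k}" using pa by (simp add: is_perm_def k_def)
  have sg: "set \<gamma> = {Suc k..n}" using pb n unfolding \<gamma>_def is_perm_def k_def by auto
  have lg: "length \<gamma> = n - k" using n unfolding \<gamma>_def k_def by simp
  have ag: "\<forall>x\<in>set \<alpha>. \<forall>y\<in>set \<gamma>. x < y" using sa sg by auto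
  have mkg: "mk None \<gamma> = mk None \<beta>" using mk_shift[of k None \<beta>] unfolding \<gamma>_def by simp
  have mkm: "mk None (merge w \<alpha> \<gamma>) = mm False w (mk None \<alpha>) (mk None \<beta>)" for w
    using mk_merge[of \<alpha> \<gamma> None None w] ag mkg by simp
  have props: "filter (\<lambda>x. x \<le> k) (merge w \<alpha> \<gamma>) = \<alpha> \<and> filter (\<lambda>x. \<not> x \<le> k) (merge w \<alpha> \<gamma>) = \<gamma>
     \<and> map (\<lambda>x. x \<le> k) (merge w \<alpha> \<gamma>) = w
     \<and> length (merge w \<alpha> \<gamma>) = length w \<and> set (merge w \<alpha> \<gamma>) = set \<alpha> \<union> set \<gamma>" if "w \<in> W" for w
  proof -
    have l1: "length (filter id w) = length \<alpha>" "length (filter Not w) = length \<gamma>"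
      using that lg len_filter_Not[of w] unfolding W_def k_def by auto
    show ?thesis
      using merge_filter1[OF l1, of "\<lambda>x. x \<le> k"] merge_props[OF l1] sa sg by auto
  qed
  have inj: "inj_on (\<lambda>w. merge w \<alpha> \<gamma>) W"
    by (rule inj_on_inverseI[where g = "map (\<lambda>x. x \<le> k)"]) (use props in blast)
  have img: "{\<sigma>. (is_perm \<sigma> \<and> SC \<sigma> = I) \<and> filter (\<lambda>x. x \<le> k) \<sigma> = \<alpha> \<and>
            std (filter (\<lambda>x. k < x) \<sigma>) = \<beta>} = (\<lambda>w. merge w \<alpha> \<gamma>) ` W"
  proof
    show "(\<lambda>w. merge w \<alpha> \<gamma>) ` W \<subseteq> {\<sigma>. (is_perm \<sigma> \<and> SC \<sigma> = I) \<and> filter (\<lambda>x. x \<le> k) \<sigma> = \<alpha> \<and>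
            std (filter (\<lambda>x. k < x) \<sigma>) = \<beta>}"
    proof
      fix \<sigma> assume "\<sigma> \<in> (\<lambda>w. merge w \<alpha> \<gamma>) ` W"
      then obtain w where w: "w \<in> W" and \<sigma>: "\<sigma> = merge w \<alpha> \<gamma>" by blast
      have P: "filter (\<lambda>x. x \<le> k) \<sigma> = \<alpha>" "filter (\<lambda>x. \<not> x \<le> k) \<sigma> = \<gamma>"
        "length \<sigma> = n" "set \<sigma> = {1..n}"
        using props[OF w] w sa sg n unfolding \<sigma> W_def k_def by auto
      have "card (set \<sigma>) = length \<sigma>" using P by simp
      then have "distinct \<sigma>" by (rule card_distinct)
      then have ps: "is_perm \<sigma>" using P by (simp add: is_perm_def)
      have "mk None \<sigma> = moc I" using mkm w unfolding \<sigma> W_def by simp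
      then have sc: "SC \<sigma> = I" using SC_eq_iff[OF perm_distinct[OF ps] cI] by simp
      have f2: "filter (\<lambda>x. k < x) \<sigma> = \<gamma>" using P(2) by (simp add: not_le)
      have "std \<gamma> = map (\<lambda>x. x - k) \<gamma>" by (rule std_shift[OF sg])
      then have "std \<gamma> = \<beta>" unfolding \<gamma>_def by (simp add: comp_def)
      then show "\<sigma> \<in> {\<sigma>. (is_perm \<sigma> \<and> SC \<sigma> = I) \<and> filter (\<lambda>x. x \<le> k) \<sigma> = \<alpha> \<and>
            std (filter (\<lambda>x. k < x) \<sigma>) = \<beta>}" using ps sc P f2 by simp
    qed
  next
    show "{\<sigma>. (is_perm \<sigma> \<and> SC \<sigma> = I) \<and> filter (\<lambda>x. x \<le> k) \<sigma> = \<alpha> \<and>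
            std (filter (\<lambda>x. k < x) \<sigma>) = \<beta>} \<subseteq> (\<lambda>w. merge w \<alpha> \<gamma>) ` W"
    proof
      fix \<sigma> assume "\<sigma> \<in> {\<sigma>. (is_perm \<sigma> \<and> SC \<sigma> = I) \<and> filter (\<lambda>x. x \<le> k) \<sigma> = \<alpha> \<and>
            std (filter (\<lambda>x. k < x) \<sigma>) = \<beta>}"
      then have ps: "is_perm \<sigma>" and sc: "SC \<sigma> = I" and q1: "filter (\<lambda>x. x \<le> k) \<sigma> = \<alpha>"
        and q2: "std (filter (\<lambda>x. k < x) \<sigma>) = \<beta>" by auto
      have ls: "length \<sigma> = n" using Q_props[OF ps, of \<alpha> \<beta>] q1 q2 n unfolding k_def by simp
      let ?d = "filter (\<lambda>x. k < x) \<sigma>"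
      have sd: "set ?d = {Suc k..n}" using filter_gt_set[OF ps] ls by simp
      have "\<beta> = map (\<lambda>x. x - k) ?d" using std_shift[OF sd] q2 by simp
      then have "\<gamma> = map (\<lambda>x. x - k + k) ?d" unfolding \<gamma>_def by simp
      also have "\<dots> = ?d" using sd by (intro map_idI) auto
      finally have gd: "\<gamma> = ?d" .
      define w where "w = map (\<lambda>x. x \<le> k) \<sigma>"
      have "\<sigma> = merge w \<alpha> \<gamma>"
        using merge_filter[of "\<lambda>x. x \<le> k" \<sigma>] q1 gd unfolding w_def by (simp add: not_le)
      moreover have "w \<in> W"
      proof -
        have "length w = n" using ls w_def by simp
        moreover have "length (filter id w) = k"
          using len_filter_id_map[of "\<lambda>x. x \<le> k" \<sigma>] q1 unfolding w_def k_def by simp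
        moreover have "mm False w (mk None \<alpha>) (mk None \<beta>) = moc I"
          using mkm[of w] \<open>\<sigma> = merge w \<alpha> \<gamma>\<close> SC_eq_iff[OF perm_distinct[OF ps] cI] sc by simp
        ultimately show ?thesis unfolding W_def by simp
      qed
      ultimately show "\<sigma> \<in> (\<lambda>w. merge w \<alpha> \<gamma>) ` W" by blast
    qed
  qed
  show ?thesis using img inj unfolding W_def \<gamma>_def k_def by simp
qed


lemma comp_bound: "is_composition J \<Longrightarrow> length J \<le> sum_list J \<and> set J \<subseteq> {0..sum_list J}"
proof (induction J)
  case (Cons j J)
  then have "0 < j" "is_composition J" by (auto simp: is_composition_def)
  then show ?case using Cons by auto
qed simp

theorem mainTheorem2:
  assumes "is_composition I"
  shows "\<exists>a :: nat list \<Rightarrow> nat list \<Rightarrow> nat.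
           finite {(J, K). a J K \<noteq> 0}
         \<and> (\<forall>J K. a J K \<noteq> 0 \<longrightarrow> is_composition J \<and> is_composition K)
         \<and> Delta (C I) = (\<lambda>p. \<Sum>(J, K)\<in>{(J, K). a J K \<noteq> 0}. of_nat (a J K) * tensor (C J) (C K) p)"
proof -
  define n where "n = sum_list I"
  define S where "S = {\<sigma>. is_perm \<sigma> \<and> SC \<sigma> = I}"
  define W where "W J K = {w. length w = n \<and> length (filter id w) = sum_list J
      \<and> mm False w (moc J) (moc K) = moc I}" for J K
  define a where "a J K = (if is_composition J \<and> is_composition K \<and> sum_list J + sum_list K = n
      then card (W J K) else 0)" for J K
  define L where "L = {J. set J \<subseteq> {0..n} \<and> length J \<le> n}"
  have finL: "finite L" unfolding L_def by (rule finite_lists_length_le) simp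
  have supp: "{(J, K). a J K \<noteq> 0} \<subseteq> L \<times> L"
  proof
    fix p assume "p \<in> {(J, K). a J K \<noteq> 0}"
    then obtain J K where p: "p = (J, K)" "a J K \<noteq> 0" by blast
    then have c: "is_composition J" "is_composition K" "sum_list J + sum_list K = n"
      unfolding a_def by (auto split: if_splits)
    show "p \<in> L \<times> L" using comp_bound[OF c(1)] comp_bound[OF c(2)] c(3) p unfolding L_def by auto
  qed
  have fin: "finite {(J, K). a J K \<noteq> 0}" using supp finL by (meson finite_SigmaI finite_subset)
  have comps: "\<forall>J K. a J K \<noteq> 0 \<longrightarrow> is_composition J \<and> is_composition K"
    unfolding a_def by auto
  have lenS: "length \<sigma> = n" if "\<sigma> \<in> S" for \<sigma>
    using that sum_SC[OF perm_distinct] unfolding S_def n_def by auto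
  have finS: "finite S"
  proof (rule finite_subset)
    show "S \<subseteq> {xs. set xs \<subseteq> {1..n} \<and> length xs = n}"
      using lenS unfolding S_def is_perm_def by auto
    show "finite {xs. set xs \<subseteq> {1..n} \<and> length xs = n}" by (rule finite_lists_length_eq) simp
  qed
  have CS: "{\<sigma>. C I \<sigma> \<noteq> 0} = S" unfolding C_def S_def by auto
  have LHS: "Delta (C I) (\<alpha>, \<beta>) = of_nat (card {\<sigma>\<in>S. filter (\<lambda>x. x \<le> length \<alpha>) \<sigma> = \<alpha> \<and>
            std (filter (\<lambda>x. length \<alpha> < x) \<sigma>) = \<beta>})" for \<alpha> \<beta>
  proof -
    let ?Q = "\<lambda>\<sigma>. filter (\<lambda>x. x \<le> length \<alpha>) \<sigma> = \<alpha> \<and> std (filter (\<lambda>x. length \<alpha> < x) \<sigma>) = \<beta>"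
    have "Delta (C I) (\<alpha>, \<beta>) = (\<Sum>\<sigma>\<in>S. C I \<sigma> * DeltaG \<sigma> (\<alpha>, \<beta>))"
      unfolding Delta_def CS ..
    also have "\<dots> = (\<Sum>\<sigma>\<in>S. (if ?Q \<sigma> then 1 else 0))"
    proof (rule sum.cong[OF refl])
      fix \<sigma> assume "\<sigma> \<in> S"
      then have "is_perm \<sigma>" "C I \<sigma> = 1" unfolding S_def C_def by auto
      then show "C I \<sigma> * DeltaG \<sigma> (\<alpha>, \<beta>) = (if ?Q \<sigma> then 1 else 0)" using DG by simp
    qed
    also have "\<dots> = (\<Sum>\<sigma>\<in>{\<sigma>\<in>S. ?Q \<sigma>}. 1)"
      using sum.inter_filter[OF finS, of "\<lambda>_. (1::rat)" ?Q] by simp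
    finally show ?thesis by simp
  qed
  have RHS: "(\<Sum>(J, K)\<in>{(J, K). a J K \<noteq> 0}. of_nat (a J K) * tensor (C J) (C K) (\<alpha>, \<beta>))
      = (if is_perm \<alpha> \<and> is_perm \<beta> then of_nat (a (SC \<alpha>) (SC \<beta>)) else (0::rat))" for \<alpha> \<beta>
  proof -
    have "(\<Sum>(J, K)\<in>{(J, K). a J K \<noteq> 0}. of_nat (a J K) * tensor (C J) (C K) (\<alpha>, \<beta>))
       = (\<Sum>p\<in>{(J, K). a J K \<noteq> 0}. if p = (SC \<alpha>, SC \<beta>) then
            (if is_perm \<alpha> \<and> is_perm \<beta> then of_nat (a (fst p) (snd p)) else 0) else (0::rat))"
    proof (rule sum.cong[OF refl])
      fix p assume "p \<in> {(J, K). a J K \<noteq> 0}"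
      obtain J K where p: "p = (J, K)" by (cases p)
      have T: "of_nat (a J K) * tensor (C J) (C K) (\<alpha>, \<beta>) = (if (J, K) = (SC \<alpha>, SC \<beta>) then
            (if is_perm \<alpha> \<and> is_perm \<beta> then of_nat (a J K) else 0) else (0::rat))"
        unfolding tensor_def C_def by auto
      show "(case p of (J, K) \<Rightarrow> of_nat (a J K) * tensor (C J) (C K) (\<alpha>, \<beta>)) =
          (if p = (SC \<alpha>, SC \<beta>) then (if is_perm \<alpha> \<and> is_perm \<beta> then of_nat (a (fst p) (snd p)) else 0) else (0::rat))"
      proof -
        have e1: "(case p of (J, K) \<Rightarrow> of_nat (a J K) * tensor (C J) (C K) (\<alpha>, \<beta>))
            = of_nat (a J K) * tensor (C J) (C K) (\<alpha>, \<beta>)" unfolding p by (rule case_prod_conv)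
        have e2: "(if p = (SC \<alpha>, SC \<beta>) then (if is_perm \<alpha> \<and> is_perm \<beta> then of_nat (a (fst p) (snd p)) else 0) else (0::rat))
           = (if (J, K) = (SC \<alpha>, SC \<beta>) then (if is_perm \<alpha> \<and> is_perm \<beta> then of_nat (a J K) else 0) else (0::rat))"
          unfolding p fst_conv snd_conv ..
        show ?thesis unfolding e1 e2 by (rule T)
      qed
    qed
    also have "\<dots> = (if (SC \<alpha>, SC \<beta>) \<in> {(J, K). a J K \<noteq> 0} then
            (if is_perm \<alpha> \<and> is_perm \<beta> then of_nat (a (SC \<alpha>) (SC \<beta>)) else 0) else 0)"
      by (rule trans[OF sum.delta[OF fin]]) simp
    also have "\<dots> = (if is_perm \<alpha> \<and> is_perm \<beta> then of_nat (a (SC \<alpha>) (SC \<beta>)) else 0)"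
      by auto
    finally show ?thesis .
  qed
  have EQ: "Delta (C I) (\<alpha>, \<beta>) = (\<Sum>(J, K)\<in>{(J, K). a J K \<noteq> 0}. of_nat (a J K) * tensor (C J) (C K) (\<alpha>, \<beta>))"
    for \<alpha> \<beta>
  proof (cases "is_perm \<alpha> \<and> is_perm \<beta> \<and> length \<alpha> + length \<beta> = n")
    case True
    then have pa: "is_perm \<alpha>" and pb: "is_perm \<beta>" and ln: "length \<alpha> + length \<beta> = n" by auto
    have k1: "{\<sigma>\<in>S. filter (\<lambda>x. x \<le> length \<alpha>) \<sigma> = \<alpha> \<and> std (filter (\<lambda>x. length \<alpha> < x) \<sigma>) = \<beta>}
      = {\<sigma>. (is_perm \<sigma> \<and> SC \<sigma> = I) \<and> filter (\<lambda>x. x \<le> length \<alpha>) \<sigma> = \<alpha> \<and>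
            std (filter (\<lambda>x. length \<alpha> < x) \<sigma>) = \<beta>}" unfolding S_def by auto
    have W': "W (SC \<alpha>) (SC \<beta>) = {w. length w = n \<and> length (filter id w) = length \<alpha>
         \<and> mm False w (mk None \<alpha>) (mk None \<beta>) = moc I}"
      unfolding W_def using mk_SC[OF perm_distinct[OF pa]] mk_SC[OF perm_distinct[OF pb]]
        sum_SC[OF perm_distinct[OF pa]] by simp
    have "card {\<sigma>\<in>S. filter (\<lambda>x. x \<le> length \<alpha>) \<sigma> = \<alpha> \<and> std (filter (\<lambda>x. length \<alpha> < x) \<sigma>) = \<beta>}
        = card (W (SC \<alpha>) (SC \<beta>))"
    proof -
      have K: "{\<sigma>. (is_perm \<sigma> \<and> SC \<sigma> = I) \<and> filter (\<lambda>x. x \<le> length \<alpha>) \<sigma> = \<alpha> \<and>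
            std (filter (\<lambda>x. length \<alpha> < x) \<sigma>) = \<beta>}
       = (\<lambda>w. merge w \<alpha> (map (\<lambda>x. x + length \<alpha>) \<beta>)) `
         {w. length w = n \<and> length (filter id w) = length \<alpha> \<and> mm False w (mk None \<alpha>) (mk None \<beta>) = moc I}"
        "inj_on (\<lambda>w. merge w \<alpha> (map (\<lambda>x. x + length \<alpha>) \<beta>))
         {w. length w = n \<and> length (filter id w) = length \<alpha> \<and> mm False w (mk None \<alpha>) (mk None \<beta>) = moc I}"
        using key[OF assms pa pb ln] by auto
      show ?thesis unfolding k1 W' K(1) using card_image[OF K(2)] .
    qed
    moreover have "a (SC \<alpha>) (SC \<beta>) = card (W (SC \<alpha>) (SC \<beta>))"
      unfolding a_def using SC_comp[OF perm_distinct[OF pa]] SC_comp[OF perm_distinct[OF pb]]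
        sum_SC[OF perm_distinct[OF pa]] sum_SC[OF perm_distinct[OF pb]] ln by simp
    ultimately show ?thesis using LHS RHS pa pb by simp
  next
    case False
    have e: "{\<sigma>\<in>S. filter (\<lambda>x. x \<le> length \<alpha>) \<sigma> = \<alpha> \<and> std (filter (\<lambda>x. length \<alpha> < x) \<sigma>) = \<beta>} = {}"
    proof (rule ccontr)
      assume "{\<sigma>\<in>S. filter (\<lambda>x. x \<le> length \<alpha>) \<sigma> = \<alpha> \<and> std (filter (\<lambda>x. length \<alpha> < x) \<sigma>) = \<beta>} \<noteq> {}"
      then obtain \<sigma> where s: "\<sigma> \<in> S" and q1: "filter (\<lambda>x. x \<le> length \<alpha>) \<sigma> = \<alpha>"
        and q2: "std (filter (\<lambda>x. length \<alpha> < x) \<sigma>) = \<beta>" by blast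
      have ps: "is_perm \<sigma>" using s unfolding S_def by blast
      have "is_perm \<alpha> \<and> is_perm \<beta> \<and> length \<alpha> + length \<beta> = length \<sigma>"
        by (rule Q_props[OF ps q1 q2])
      then show False using False lenS[OF s] by simp
    qed
    have c0: "card {\<sigma>\<in>S. filter (\<lambda>x. x \<le> length \<alpha>) \<sigma> = \<alpha> \<and> std (filter (\<lambda>x. length \<alpha> < x) \<sigma>) = \<beta>} = 0"
      unfolding e by simp
    have z: "a (SC \<alpha>) (SC \<beta>) = 0" if pp: "is_perm \<alpha> \<and> is_perm \<beta>"
    proof -
      have "sum_list (SC \<alpha>) = length \<alpha>" "sum_list (SC \<beta>) = length \<beta>"
        using pp sum_SC perm_distinct by blast+
      then have "sum_list (SC \<alpha>) + sum_list (SC \<beta>) \<noteq> n" using False pp by simp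
      then show ?thesis unfolding a_def by simp
    qed
    show ?thesis unfolding LHS RHS c0 using z by simp
  qed
  show ?thesis
  proof (intro exI[of _ a] conjI fin comps)
    show "Delta (C I) = (\<lambda>p. \<Sum>(J, K)\<in>{(J, K). a J K \<noteq> 0}. of_nat (a J K) * tensor (C J) (C K) p)"
    proof (rule ext)
      fix p :: "nat list \<times> nat list"
      obtain \<alpha> \<beta> where p: "p = (\<alpha>, \<beta>)" by (cases p)
      show "Delta (C I) p = (\<Sum>(J, K)\<in>{(J, K). a J K \<noteq> 0}. of_nat (a J K) * tensor (C J) (C K) p)"
        unfolding p by (rule EQ)
    qed
  qed
qed

end
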